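(* Let $B_n^{(m)}(x)$ denote the generalized Bernoulli polynomials of order $m$, defined by $\dfrac{z^me^{xz}}{(e^z-1)^m}=\sum_{n\ge0}B_n^{(m)}(x)\dfrac{z^n}{n!}$ for $|z|<2\pi$. (1) For every positive integer $m$, $$\frac{z^m}{\sin^m z}=\sum_{n=0}^\infty\frac{(-1)^n4^nB_{2n}^{(m)}(m/2)}{(2n)!}z^{2n},\qquad |z|<\pi.$$ (2) For every positive even integer $m$, $$\sum_{k=0}^m\binom mk B_k^{(m+1)}\Bigl(\frac{m+1}2\Bigr)2^k=0.$$ *)

theory Defs
  imports "HOL-Analysis.Analysis" "HOL-Computational_Algebra.Formal_Power_Series"
begin

text \<open>We take the coefficient in the ring of formal power series, which is the
  Taylor expansion of this function (analytic for |z| < 2 pi).\<close>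
definition gen_bernoulli :: "nat \<Rightarrow> nat \<Rightarrow> real \<Rightarrow> real" where
  "gen_bernoulli m n x =
     fact n * fps_nth ((fps_X / (fps_exp 1 - 1)) ^ m * fps_exp x) n"

end

theory Submission
  imports Defs "HOL-Complex_Analysis.Complex_Analysis"
begin

definition GG :: "'a::field_char_0 fps" where
  "GG = fps_X / (fps_exp 1 - 1)"

lemma E1m1_nth0: "(fps_exp (1::'a::field_char_0) - 1) $ 0 = 0" by simp
lemma E1m1_nth1: "(fps_exp (1::'a::field_char_0) - 1) $ 1 = 1" by simp

lemma E1m1_nz: "fps_exp (1::'a::field_char_0) - 1 \<noteq> 0"
proof
  assume "fps_exp (1::'a) - 1 = 0"
  hence "(fps_exp (1::'a) - 1) $ 1 = 0" by simp
  thus False by simp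
qed

lemma E1m1_subdeg: "subdegree (fps_exp (1::'a::field_char_0) - 1) = 1"
  by (rule subdegreeI) auto

lemma GG_mult: "GG * (fps_exp (1::'a::field_char_0) - 1) = fps_X"
proof -
  have "subdegree (fps_X::'a fps) = 1" by simp
  thus ?thesis unfolding GG_def
    by (intro fps_times_divide_eq[OF E1m1_nz]) (simp only: E1m1_subdeg order_refl)
qed

lemma Em1_nz: "fps_exp (-1::'a::field_char_0) - 1 \<noteq> 0"
proof
  assume "fps_exp (-1::'a) - 1 = 0"
  hence "(fps_exp (-1::'a) - 1) $ 1 = 0" by simp
  thus False by simp
qed

lemma GG_reflect: "(GG oo (-fps_X)) = (GG :: 'a::field_char_0 fps) * fps_exp 1"
proof -
  have c0: "(-fps_X :: 'a fps) $ 0 = 0" by simp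
  have "(GG oo (-fps_X)) * (fps_exp (-1::'a) - 1) = (GG * (fps_exp 1 - 1)) oo (-fps_X)"
    by (simp add: fps_compose_mult_distrib[OF c0] fps_compose_sub_distrib)
  also have "\<dots> = - fps_X" by (simp add: GG_mult)
  finally have 1: "(GG oo (-fps_X)) * (fps_exp (-1::'a) - 1) = - fps_X" .
  have ee: "fps_exp (1::'a) * fps_exp (-1) = 1"
    using fps_exp_add_mult[of "1::'a" "-1"] by simp
  have "(GG * fps_exp 1) * (fps_exp (-1::'a) - 1) = GG * (1 - fps_exp 1)"
    by (simp add: algebra_simps ee)
  also have "\<dots> = - (GG * (fps_exp 1 - 1))" by (simp add: algebra_simps)
  also have "\<dots> = - fps_X" by (simp add: GG_mult)
  finally have 2: "(GG * fps_exp 1) * (fps_exp (-1::'a) - 1) = - fps_X" .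
  from 1 2 Em1_nz show ?thesis by (metis mult_right_cancel)
qed

lemma P_reflect:
  "((GG::'a::field_char_0 fps) ^ m * fps_exp x) oo (-fps_X) = GG ^ m * fps_exp (of_nat m - x)"
proof -
  have c0: "(-fps_X :: 'a fps) $ 0 = 0" by simp
  have "((GG::'a fps) ^ m * fps_exp x) oo (-fps_X) = (GG * fps_exp 1) ^ m * fps_exp (-x)"
    by (simp add: fps_compose_mult_distrib[OF c0] fps_compose_power[OF c0, symmetric] GG_reflect)
  also have "\<dots> = GG ^ m * (fps_exp 1 ^ m * fps_exp (-x))" by (simp add: power_mult_distrib)
  also have "\<dots> = GG ^ m * fps_exp (of_nat m - x)"
    by (simp add: fps_exp_power_mult fps_exp_add_mult[symmetric])
  finally show ?thesis .
qed

lemma P_odd_zero: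
  assumes "odd n"
  shows "((GG::'a::field_char_0 fps) ^ m * fps_exp (of_nat m / 2)) $ n = 0"
proof -
  let ?P = "(GG::'a fps) ^ m * fps_exp (of_nat m / 2)"
  have "?P oo (-fps_X) = ?P" by (simp add: P_reflect)
  hence "(?P oo (-fps_X)) $ n = ?P $ n" by simp
  hence "(-1)^n * ?P $ n = ?P $ n" by (simp add: fps_compose_uminus')
  with assms have "- ?P $ n = ?P $ n" by simp
  thus ?thesis by simp
qed

lemma GG_deriv: "fps_X * fps_deriv GG = GG - GG^2 * fps_exp (1::'a::field_char_0)"
proof -
  have "fps_deriv (GG * (fps_exp (1::'a) - 1)) = 1" by (simp add: GG_mult)
  hence d: "GG * fps_exp (1::'a) + fps_deriv GG * (fps_exp 1 - 1) = 1"
    by (simp add: fps_deriv_mult)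
  hence d2: "fps_deriv GG * (fps_exp 1 - 1) = 1 - GG * fps_exp (1::'a)"
    by (metis add_diff_cancel_left')
  have "(fps_X * fps_deriv GG) * (fps_exp (1::'a) - 1) = fps_X * (1 - GG * fps_exp 1)"
    by (metis mult.assoc d2)
  also have "\<dots> = fps_X - (GG * fps_exp 1) * fps_X"
    by (simp add: right_diff_distrib mult.commute)
  also have "\<dots> = GG * (fps_exp (1::'a) - 1) - (GG * fps_exp 1) * (GG * (fps_exp (1::'a) - 1))"
    by (simp only: GG_mult)
  also have "\<dots> = (GG - GG^2 * fps_exp (1::'a)) * (fps_exp (1::'a) - 1)"
    by (simp add: power2_eq_square ring_distribs mult_ac)
  finally show ?thesis using E1m1_nz by (metis mult_right_cancel)
qed


lemma F_key:
  assumes "m > 0" "even m"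
  shows "((GG::'a::field_char_0 fps) ^ Suc m * fps_exp (of_nat m / 2 + 1)) $ m = 0"
proof -
  define c :: 'a where "c = of_nat m / 2"
  define P where "P = (GG::'a fps) ^ m * fps_exp c"
  define F where "F = (GG::'a fps) ^ Suc m * fps_exp (c + 1)"
  obtain k where k: "m = Suc k" using assms(1) by (cases m) auto
  have "fps_X * fps_deriv P = fps_const (of_nat m) * (fps_X * fps_deriv GG) * GG ^ k * fps_exp c
         + fps_const c * (fps_X * P)"
  proof -
    have dp: "fps_deriv ((GG::'a fps)^m) = fps_const (of_nat m) * fps_deriv GG * GG^k"
      by (simp only: fps_deriv_power k diff_Suc_1)
    show ?thesis unfolding P_def fps_deriv_mult dp fps_exp_deriv by (simp add: algebra_simps)
  qed
  also have "\<dots> = fps_const (of_nat m) * (GG - GG^2 * fps_exp 1) * GG ^ k * fps_exp c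
         + fps_const c * (fps_X * P)" by (simp only: GG_deriv)
  also have "\<dots> = fps_const (of_nat m) * P - fps_const (of_nat m) * F + fps_const c * (fps_X * P)"
    unfolding P_def F_def k by (simp add: fps_exp_add_mult power2_eq_square algebra_simps)
  finally have eq: "fps_X * fps_deriv P = fps_const (of_nat m) * P - fps_const (of_nat m) * F + fps_const c * (fps_X * P)" .
  have "(fps_X * fps_deriv P) $ m = (fps_const (of_nat m) * P - fps_const (of_nat m) * F + fps_const c * (fps_X * P)) $ m"
    by (simp only: eq)
  hence "of_nat m * P $ m = of_nat m * P $ m - of_nat m * F $ m + c * P $ k"
    using k by simp
  moreover have "P $ k = 0" unfolding P_def c_def using assms k by (intro P_odd_zero) auto
  ultimately have "of_nat m * F $ m = 0" by simp
  hence "F $ m = 0" using assms by simp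
  thus ?thesis unfolding F_def c_def .
qed


lemma gb_GG: "gen_bernoulli m n x = fact n * ((GG::real fps) ^ m * fps_exp x) $ n"
  unfolding gen_bernoulli_def GG_def ..

lemma part2:
  assumes "m > 0" "even m"
  shows "(\<Sum>k = 0..m. real (m choose k) * gen_bernoulli (m + 1) k (real (m + 1) / 2) * 2 ^ k) = 0"
proof -
  define A where "A = (GG::real fps) ^ (m+1) * fps_exp (real (m + 1) / 2)"
  have FA: "(GG::real fps) ^ Suc m * fps_exp (of_nat m / 2 + 1) = A * fps_exp (1/2)"
    unfolding A_def by (simp add: mult.assoc fps_exp_add_mult[symmetric] add_divide_distrib)
  have "(A * fps_exp (1/2)) $ m = 0" using F_key[OF assms, where 'a=real] FA by simp
  hence z: "(\<Sum>i=0..m. A $ i * ((1/2)^(m-i) / fact (m-i))) = 0"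
    by (simp add: fps_mult_nth)
  have "(\<Sum>k = 0..m. real (m choose k) * gen_bernoulli (m + 1) k (real (m + 1) / 2) * 2 ^ k)
      = (\<Sum>k = 0..m. (2^m * fact m) * (A $ k * ((1/2)^(m-k) / fact (m-k))))"
  proof (rule sum.cong[OF refl])
    fix k assume "k \<in> {0..m}"
    hence km: "k \<le> m" by simp
    have b: "real (m choose k) = fact m / (fact k * fact (m-k))"
      using binomial_fact[OF km] by simp
    have p: "(2::real)^m = 2^k * 2^(m-k)" using km by (simp add: power_add[symmetric])
    show "real (m choose k) * gen_bernoulli (m + 1) k (real (m + 1) / 2) * 2 ^ k
        = (2^m * fact m) * (A $ k * ((1/2)^(m-k) / fact (m-k)))"
      unfolding gb_GG A_def b p by (simp add: field_simps power_one_over)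
  qed
  also have "\<dots> = (2^m * fact m) * (\<Sum>k = 0..m. A $ k * ((1/2)^(m-k) / fact (m-k)))"
    by (rule sum_distrib_left[symmetric])
  also have "\<dots> = 0" by (simp only: z mult_zero_right)
  finally show ?thesis .
qed


definition cfps :: "real fps \<Rightarrow> complex fps" where
  "cfps F = Abs_fps (\<lambda>n. complex_of_real (F $ n))"

lemma cfps_nth [simp]: "cfps F $ n = complex_of_real (F $ n)"
  by (simp add: cfps_def)

lemma cfps_mult: "cfps (F * G) = cfps F * cfps G"
  by (simp add: fps_eq_iff fps_mult_nth)

lemma cfps_one: "cfps 1 = 1"
  by (simp add: fps_eq_iff)

lemma cfps_power: "cfps (F ^ n) = cfps F ^ n"
  by (induction n) (simp_all add: cfps_one cfps_mult)

lemma cfps_diff: "cfps (F - G) = cfps F - cfps G"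
  by (simp add: fps_eq_iff)

lemma cfps_X: "cfps fps_X = fps_X"
  by (simp add: fps_eq_iff)

lemma cfps_exp: "cfps (fps_exp x) = fps_exp (complex_of_real x)"
  by (simp add: fps_eq_iff)

lemma cfps_GG: "cfps GG = GG"
proof -
  have "cfps GG * (fps_exp 1 - 1) = cfps (GG * (fps_exp 1 - 1))"
    by (simp add: cfps_mult cfps_diff cfps_exp cfps_one)
  also have "\<dots> = GG * (fps_exp 1 - 1)" by (simp add: GG_mult cfps_X)
  finally show ?thesis using E1m1_nz by (metis mult_right_cancel)
qed

definition hh :: "complex \<Rightarrow> complex" where
  "hh w = (if w = 0 then 1 else w / (exp w - 1))"

lemma hh_exp: "hh has_fps_expansion GG"
proof -
  have e: "(\<lambda>x::complex. exp x - 1) has_fps_expansion fps_exp 1 - 1"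
    by (intro has_fps_expansion_diff has_fps_expansion_exp1 has_fps_expansion_1)
  have "(\<lambda>x. if x = 0 then 1 else x / (exp x - 1)) has_fps_expansion fps_X / (fps_exp (1::complex) - 1)"
    apply (rule has_fps_expansion_divide[OF has_fps_expansion_fps_X e])
      apply (simp only: E1m1_subdeg subdegree_fps_X order_refl)
     apply (rule E1m1_nz)
    apply (simp only: E1m1_subdeg)
    apply simp
    done
  thus ?thesis unfolding hh_def[abs_def] GG_def .
qed

lemma exp_ne1: fixes w :: complex assumes "norm w < 2 * pi" "w \<noteq> 0" shows "exp w - 1 \<noteq> 0"
proof
  assume "exp w - 1 = 0"
  hence "exp w = 1" by simp
  then obtain n :: int where re: "Re w = 0" and im: "Im w = of_int (2 * n) * pi"
    by (auto simp: exp_eq_1)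
  have "norm w = \<bar>Im w\<bar>" using re by (simp add: cmod_def)
  also have "\<dots> = 2 * \<bar>of_int n\<bar> * pi" using im by (simp add: abs_mult)
  finally have "\<bar>of_int n :: real\<bar> < 1" using assms(1) by simp
  hence "n = 0" by linarith
  hence "w = 0" using re im by (simp add: complex_eq_iff)
  with assms show False by simp
qed

lemma hh_holo: "hh holomorphic_on ball 0 (2 * pi)"
proof (rule no_isolated_singularity'[where K = "{0}"])
  show "(hh \<longlongrightarrow> hh z) (at z within ball 0 (2 * pi))" if "z \<in> {0}" for z
    using has_fps_expansion_imp_continuous[OF hh_exp, of "ball 0 (2*pi)"] that
    by (simp add: continuous_within)
  have "(\<lambda>w. w / (exp w - 1)) holomorphic_on ball 0 (2 * pi) - {0}"
    by (intro holomorphic_intros) (use exp_ne1 in force)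
  thus "hh holomorphic_on ball 0 (2 * pi) - {0}"
    by (rule holomorphic_transform) (auto simp: hh_def)
qed auto


lemma exp_sin_id: "exp (2 * \<i> * z) - 1 = 2 * \<i> * exp (\<i> * z) * sin z"
proof -
  have s: "2 * \<i> * sin z = exp (\<i> * z) - exp (- (\<i> * z))"
    by (simp add: sin_exp_eq)
  have "2 * \<i> * exp (\<i> * z) * sin z = exp (\<i> * z) * (2 * \<i> * sin z)"
    by (simp add: mult_ac)
  also have "\<dots> = exp (\<i> * z) * (exp (\<i> * z) - exp (- (\<i> * z)))" by (simp only: s)
  also have "\<dots> = exp (\<i> * z + \<i> * z) - exp (\<i> * z + - (\<i> * z))"
    by (simp only: exp_add right_diff_distrib)
  also have "\<dots> = exp (2 * \<i> * z) - 1" by (simp add: mult_2[symmetric] mult.assoc)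
  finally show ?thesis by simp
qed

lemma part1:
  fixes z :: complex
  assumes "m > 0" "z \<noteq> 0" "norm z < pi"
  shows "(\<lambda>n. complex_of_real ((-1) ^ n * 4 ^ n * gen_bernoulli m (2 * n) (real m / 2)
                        / fact (2 * n)) * z ^ (2 * n)) sums (z ^ m / (sin z) ^ m)"
proof -
  define c where "c = complex_of_real (real m / 2)"
  define g where "g w = hh w ^ m * exp (c * w)" for w
  define RP where "RP = (GG::real fps) ^ m * fps_exp (real m / 2)"
  have gexp: "g has_fps_expansion GG ^ m * fps_exp c"
    unfolding g_def[abs_def]
    by (intro has_fps_expansion_mult has_fps_expansion_power hh_exp has_fps_expansion_exp)
  have gholo: "g holomorphic_on eball 0 (ereal (2 * pi))"
    unfolding g_def[abs_def] eball_ereal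
    by (intro holomorphic_intros hh_holo)
  define w where "w = 2 * \<i> * z"
  have nw: "norm w = 2 * norm z" by (simp add: w_def norm_mult)
  have coef: "(GG ^ m * fps_exp c :: complex fps) = cfps RP"
    unfolding RP_def c_def by (simp add: cfps_mult cfps_power cfps_GG cfps_exp)
  have S: "(\<lambda>n. cfps RP $ n * w ^ n) sums g w"
    using has_fps_expansion_imp_sums_complex[OF gexp gholo, of w] nw assms(3) coef by simp
  have w0: "w \<noteq> 0" using assms(2) by (simp add: w_def)
  have ez: "exp (\<i> * z) \<noteq> 0" by simp
  have cw: "exp (c * w) = exp (\<i> * z) ^ m"
  proof -
    have "c * w = of_nat m * (\<i> * z)" by (simp add: c_def w_def field_simps)
    thus ?thesis by (simp add: exp_of_nat_mult)
  qed
  have "g w = (w / (exp w - 1)) ^ m * exp (\<i> * z) ^ m"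
    using w0 by (simp add: g_def hh_def cw)
  also have "\<dots> = (z / (exp (\<i> * z) * sin z)) ^ m * exp (\<i> * z) ^ m"
    by (simp add: w_def exp_sin_id)
  also have "\<dots> = z ^ m / sin z ^ m"
    using ez by (simp add: power_divide power_mult_distrib)
  finally have gw: "g w = z ^ m / sin z ^ m" .
  have S2: "(\<lambda>n. cfps RP $ (2 * n) * w ^ (2 * n)) sums (z ^ m / sin z ^ m)"
  proof (subst sums_mono_reindex[where f = "\<lambda>n. cfps RP $ n * w ^ n" and g = "\<lambda>n. 2 * n"])
    show "strict_mono (\<lambda>n::nat. 2 * n)" by (auto simp: strict_mono_def)
    show "cfps RP $ n * w ^ n = 0" if "n \<notin> range (\<lambda>n::nat. 2 * n)" for n
    proof -
      have "odd n" using that by (auto elim!: evenE)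
      hence "RP $ n = 0" unfolding RP_def using P_odd_zero[of n m, where 'a=real] by simp
      thus ?thesis by simp
    qed
    show "(\<lambda>n. cfps RP $ n * w ^ n) sums (z ^ m / sin z ^ m)" using S gw by simp
  qed
  have "(\<lambda>n. cfps RP $ (2 * n) * w ^ (2 * n)) = (\<lambda>n. complex_of_real ((-1) ^ n * 4 ^ n * gen_bernoulli m (2 * n) (real m / 2)
                        / fact (2 * n)) * z ^ (2 * n))"
  proof
    fix n
    have wp: "w ^ (2 * n) = (-4) ^ n * z ^ (2 * n)"
    proof -
      have "w ^ (2 * n) = (w ^ 2) ^ n" by (simp add: power_mult)
      also have "w ^ 2 = -4 * z ^ 2" by (simp add: w_def power_mult_distrib)
      finally have "w ^ (2 * n) = (-4 * z ^ 2) ^ n" .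
      thus ?thesis by (simp only: power_mult_distrib power_mult)
    qed
    show "cfps RP $ (2 * n) * w ^ (2 * n) = complex_of_real ((-1) ^ n * 4 ^ n * gen_bernoulli m (2 * n) (real m / 2)
                        / fact (2 * n)) * z ^ (2 * n)"
      unfolding wp gb_GG RP_def by (simp add: power_mult_distrib[symmetric])
  qed
  with S2 show ?thesis by simp
qed

theorem lemma3:
  shows "(\<forall>m::nat. m > 0 \<longrightarrow>
            (\<forall>z::complex. z \<noteq> 0 \<and> norm z < pi \<longrightarrow>
               (\<lambda>n. complex_of_real ((-1) ^ n * 4 ^ n * gen_bernoulli m (2 * n) (real m / 2)
                        / fact (2 * n)) * z ^ (2 * n))
               sums (z ^ m / (sin z) ^ m)))
       \<and> (\<forall>m::nat. m > 0 \<and> even m \<longrightarrow>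
            (\<Sum>k = 0..m. real (m choose k) * gen_bernoulli (m + 1) k (real (m + 1) / 2) * 2 ^ k) = 0)"
  using part1 part2 by blast

end
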